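(* Let $r_A^{(1)}, r_B^{(1)}, r_A^{(2)}, r_B^{(2)} > 0$ be the initial reserves of two zero-fee constant-product pools $P_1, P_2$ trading assets $A$ and $B$, and let $a>0$. Then there exist $x \in (0, r_A^{(2)})$ and $y>0$ such that the following four-step atomic sequence is well defined and realizes the migration of exactly $a$ units of $A$. \begin{enumerate} \item Step 1: $x+a$ units of $A$ are input to $P_1$, which outputs $b=\dfrac{r_B^{(1)}(x+a)}{r_A^{(1)}+x+a}$ units of $B$. Of this input, $a$ units come from the principal and $x$ units come from flash liquidity. \item Step 2: the $b$ units of $B$ are input to $P_2$, which outputs exactly $x$ units of $A$; these repay the flash liquidity. This step requires \[ b=\frac{r_B^{(2)}x}{r_A^{(2)}-x}, \] equivalently the consistency condition \[ r_B^{(1)}(x+a)(r_A^{(2)}-x)=r_B^{(2)}x\,(r_A^{(1)}+x+a). \] \item Step 3: $y$ units of $A$ are input to $P_2$, now in state $(r_A^{(2)}-x,\ r_B^{(2)}+b)$, which outputs \[ b'=\frac{r_A^{(2)}r_B^{(2)}y}{(r_A^{(2)}-x)(r_A^{(2)}-x+y)} \] units of $B$. \item Step 4: the $b'$ units of $B$ are input to $P_1$, now in state $(r_A^{(1)}+x+a,\ r_B^{(1)}-b)$, which outputs \[ y+a'=\frac{(r_A^{(1)}+x+a)\,b'}{r_B^{(1)}-b+b'} \] units of $A$. Of this output, $y$ units repay Step 3 and $a'$ units go to the beneficiary. \end{enumerate} For these $x$ and $y$, one has $a'=a$. Consequently, over the whole sequence, the principal's balance of $A$ changes by $-a$ and the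 beneficiary's balance of $A$ changes by $+a$.
   Context: Model conventions: \begin{itemize} \item A zero-fee constant-product pool $i$ with reserves $(r_A^{(i)}, r_B^{(i)})$ keeps the product $r_A^{(i)} r_B^{(i)}=k_i$ invariant under every swap. Inputting $\delta$ of one asset therefore outputs the amount of the other asset that keeps this product unchanged. \item Each step updates the reserves of the pool it acts on, and later steps use the updated reserves. \item The principal supplies the $a$ units of $A$. \item The beneficiary receives the $a'$ units of $A$. \item Flash liquidity of $x$ units of $A$ must be repaid within the same atomic execution. \end{itemize} *)

theory Defs
  imports Complex_Main
begin

text \<open>Zero-fee constant-product swap: a pool with reserves rin (of the input asset)
and rout (of the output asset) receives d units of the input asset and outputs the
amount o of the output asset that keeps the product invariant:
(rin + d) * (rout - o) = rin * rout.\<close>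
definition cp_out :: "real \<Rightarrow> real \<Rightarrow> real \<Rightarrow> real" where
  "cp_out rin rout d = rout - (rin * rout) / (rin + d)"

end

theory Submission
  imports Defs
begin

theorem mainTheorem1:
  fixes rA1 rB1 rA2 rB2 a :: real
  assumes "rA1 > 0" "rB1 > 0" "rA2 > 0" "rB2 > 0" "a > 0"
  shows "\<exists>x y. 0 < x \<and> x < rA2 \<and> 0 < y \<and>
    (let
       \<comment> \<open>Step 1: x + a units of A into P1 (state (rA1, rB1))\<close>
       b = cp_out rA1 rB1 (x + a);
       \<comment> \<open>Step 2: b units of B into P2 (state (rA2, rB2)), outputs x2 units of A\<close>
       x2 = cp_out rB2 rA2 b;
       \<comment> \<open>Step 3: y units of A into P2 (state (rA2 - x2, rB2 + b))\<close>
       b' = cp_out (rA2 - x2) (rB2 + b) y;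
       \<comment> \<open>Step 4: b' units of B into P1 (state (rA1 + x + a, rB1 - b))\<close>
       out4 = cp_out (rB1 - b) (rA1 + x + a) b';
       a' = out4 - y
     in
       b = rB1 * (x + a) / (rA1 + x + a) \<and>
       0 < b \<and> b < rB1 \<and>
       x2 = x \<and>
       b = rB2 * x / (rA2 - x) \<and>
       rB1 * (x + a) * (rA2 - x) = rB2 * x * (rA1 + x + a) \<and>
       b' = rA2 * rB2 * y / ((rA2 - x) * (rA2 - x + y)) \<and>
       0 < b' \<and>
       out4 = (rA1 + x + a) * b' / (rB1 - b + b') \<and>
       y < out4 \<and>
       a' = a)"
proof -
  define f where "f = (\<lambda>x::real. rB1 * (x + a) * (rA2 - x) - rB2 * x * (rA1 + x + a))"
  have c: "continuous_on {0..rA2} f" unfolding f_def by (intro continuous_intros)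
  have f0: "f 0 > 0" using assms by (simp add: f_def)
  have fr: "f rA2 < 0" using assms unfolding f_def
    by (simp add: mult_pos_pos add_pos_pos)
  obtain x where x: "0 \<le> x" "x \<le> rA2" "f x = 0"
    using IVT2'[of f rA2 0 0, OF _ _ _ c] f0 fr assms by force
  have x0: "x \<noteq> 0" using x f0 by auto
  have xr: "x \<noteq> rA2" using x fr by auto
  have xp: "0 < x" "x < rA2" using x x0 xr by auto
  define S where "S = rA1 + x + a"
  define D where "D = rA2 - x"
  have Sp: "S > 0" using assms xp by (simp add: S_def)
  have Dp: "D > 0" using xp by (simp add: D_def)
  have eq: "rB1 * (x + a) * D = rB2 * x * S" using x(3) by (simp add: f_def D_def S_def)
  define b where "b = cp_out rA1 rB1 (x + a)"
  have b1: "b = rB1 * (x + a) / S" unfolding b_def cp_out_def S_def using Sp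
    by (simp add: S_def field_simps)
  have b2: "b = rB2 * x / D" unfolding b1 using eq Sp Dp by (simp add: field_simps)
  have bp: "0 < b" using b1 assms xp Sp by simp
  have rB1b: "rB1 - b = rB1 * rA1 / S" unfolding b1 using Sp by (simp add: S_def field_simps)
  have bl: "b < rB1" using rB1b assms Sp by (smt (verit) divide_pos_pos mult_pos_pos)
  have rB2b: "rB2 + b = rB2 * rA2 / D" unfolding b2 using Dp by (simp add: D_def field_simps)
  have x2: "cp_out rB2 rA2 b = x" unfolding cp_out_def
    using rB2b Dp assms bp by (simp add: D_def field_simps)
  have b': "cp_out (rA2 - x) (rB2 + b) x = b"
  proof -
    have "rA2 - x = D" by (simp add: D_def)
    then have "cp_out (rA2 - x) (rB2 + b) x = rB2 * rA2 / D - rB2" unfolding cp_out_def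
      using rB2b Dp assms by (simp add: field_simps)
    also have "\<dots> = b" using b2 Dp by (simp add: D_def field_simps)
    finally show ?thesis .
  qed
  have o4: "cp_out (rB1 - b) (rA1 + x + a) b = x + a"
  proof -
    have "rA1 + x + a = S" by (simp add: S_def)
    then have "cp_out (rB1 - b) (rA1 + x + a) b = S - rA1" unfolding cp_out_def
      using rB1b Sp assms by (simp add: field_simps)
    then show ?thesis by (simp add: S_def)
  qed
  have b'f: "b = rA2 * rB2 * x / ((rA2 - x) * (rA2 - x + x))"
    using b2 assms by (simp add: D_def)
  have o4f: "x + a = (rA1 + x + a) * b / (rB1 - b + b)"
  proof -
    have "S * b = rB1 * (x + a)" using b1 Sp by simp
    then have "rB1 * (x + a) = (rA1 + x + a) * b" by (simp add: S_def)
    then have "(rA1 + x + a) * b / rB1 = x + a" using assms by (metis nonzero_mult_div_cancel_left less_irrefl)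
    then show ?thesis by simp
  qed
  have eq': "rB1 * (x + a) * (rA2 - x) = rB2 * x * (rA1 + x + a)"
    using eq by (simp add: D_def S_def)
  have b1': "b = rB1 * (x + a) / (rA1 + x + a)" using b1 by (simp add: S_def)
  have bb: "b' = b \<Longrightarrow> 0 < b'" for b' using bp by simp
  have b2': "b = rB2 * x / (rA2 - x)" using b2 by (simp add: D_def)
  show ?thesis
    apply (rule exI[of _ x], rule exI[of _ x])
    unfolding Let_def b_def[symmetric] x2 b' o4
  proof (intro conjI)
    show "x + a - x = a" by simp
    show "x < x + a" using assms by simp
  qed (rule refl | fact xp bp bl b'f o4f b1' b2' eq')+
qed
end
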